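(* Let $m\ge 2$, $n\ge1$ be integers, let $\mathcal P=(p_{i_1 i_2\dots i_m})\in\mathbb R^{[m,n]}$ be a transition probability tensor with first-index flattening $R\in\mathbb R^{n\times n^{m-1}}$, let $v\in\mathbb R^n$ be a stochastic vector, and let $\alpha\in[0,1)$ satisfy $\alpha<\frac{1}{m-1}$. Define $f:\mathbb R^n\to\mathbb R^n$ by $f(\mathbf{x})=\alpha R(\mathbf{x}\otimes\cdots\otimes\mathbf{x})+(1-\alpha)v-\mathbf{x}$ (with $m-1$ Kronecker factors $\mathbf{x}$), with Jacobian $$J_f(\mathbf{x})=\alpha R\Big(I\otimes\mathbf{x}\otimes\cdots\otimes\mathbf{x}+\mathbf{x}\otimes I\otimes\mathbf{x}\otimes\cdots\otimes\mathbf{x}+\cdots+\mathbf{x}\otimes\cdots\otimes\mathbf{x}\otimes I\Big)-I.$$ Consider the Newton iteration with initial vector $\mathbf{x}_0=0$: $$\mathbf{x}_{k+1}=\mathbf{x}_k-J_f(\mathbf{x}_k)^{-1}f(\mathbf{x}_k),\quad k=0,1,2,\dots$$ Then this iteration converges to the unique solution $\mathbf{x}$ of the multilinear PageRank equation $\mathbf{x}=\alpha R(\mathbf{x}\otimes\cdots\otimes\mathbf{x})+(1-\alpha)v$ (i.e. $f(\mathbf{x})=0$).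
   Context: A transition probability tensor $\mathcal P\in\mathbb R^{[m,n]}$ (order $m$, each dimension $n$) satisfies $p_{i_1\dots i_m}\ge0$ and $\sum_{i_1=1}^n p_{i_1 i_2\dots i_m}=1$ for all $(i_2,\dots,i_m)$. A vector is stochastic if its entries are non-negative and sum to one. The flattening $R$ along the first index is the $n\times n^{m-1}$ matrix with $\big(R(y^{(2)}\otimes\cdots\otimes y^{(m)})\big)_i=\sum_{i_2,\dots,i_m=1}^n p_{i i_2\dots i_m}y^{(2)}_{i_2}\cdots y^{(m)}_{i_m}$ for all $y^{(j)}\in\mathbb R^n$. $I$ is the $n\times n$ identity, $\otimes$ the Kronecker product; in the Jacobian, each of the $m-1$ summands is a Kronecker product of $m-1$ factors with $I$ in exactly one position and $\mathbf{x}$ (as an $n\times1$ matrix) in the other $m-2$ positions. *)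

theory Defs
  imports "HOL-Analysis.Analysis"
begin

text \<open>An order-m tensor with all dimensions n is a function on index lists
  (i_1,...,i_m), the index set {1..n} being the finite type 'n.
  Only lists of length m are relevant.\<close>

definition transition_probability_tensor :: "nat \<Rightarrow> ('n::finite list \<Rightarrow> real) \<Rightarrow> bool" where
  "transition_probability_tensor m P \<longleftrightarrow>
     (\<forall>is. length is = m \<longrightarrow> P is \<ge> 0) \<and>
     (\<forall>is. length is = m - 1 \<longrightarrow> (\<Sum>i\<in>UNIV. P (i # is)) = 1)"

definition stochastic :: "real ^ 'n::finite \<Rightarrow> bool" where
  "stochastic x \<longleftrightarrow> (\<forall>i. x $ i \<ge> 0) \<and> (\<Sum>i\<in>UNIV. x $ i) = 1"

text \<open>Action of the flattening R along the first index on a Kronecker product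
  y^(2) \<otimes> ... \<otimes> y^(m) of vectors, given as the list ys = [y^(2),...,y^(m)]:
  (R(y^(2) \<otimes> ... \<otimes> y^(m)))_i = sum_{i_2..i_m} p_{i i_2 .. i_m} y^(2)_{i_2} ... y^(m)_{i_m}.\<close>

definition flat_apply :: "('n::finite list \<Rightarrow> real) \<Rightarrow> (real ^ 'n) list \<Rightarrow> real ^ 'n" where
  "flat_apply P ys = (\<chi> i. \<Sum>is\<in>{is. length is = length ys}.
       P (i # is) * (\<Prod>j<length ys. ys ! j $ (is ! j)))"

definition R_pow :: "nat \<Rightarrow> ('n::finite list \<Rightarrow> real) \<Rightarrow> real ^ 'n \<Rightarrow> real ^ 'n" where
  "R_pow m P x = flat_apply P (replicate (m - 1) x)"

definition PR_f :: "nat \<Rightarrow> ('n::finite list \<Rightarrow> real) \<Rightarrow> real \<Rightarrow> real ^ 'n \<Rightarrow> real ^ 'n \<Rightarrow> real ^ 'n" where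
  "PR_f m P \<alpha> v x = \<alpha> *\<^sub>R R_pow m P x + (1 - \<alpha>) *\<^sub>R v - x"

text \<open>The Jacobian
  alpha R (I\<otimes>x\<otimes>..\<otimes>x + x\<otimes>I\<otimes>x\<otimes>..\<otimes>x + ... + x\<otimes>..\<otimes>x\<otimes>I) - I.
  Column c of the summand with I in position j (0-based, j < m-1) is
  R(x\<otimes>..\<otimes>e_c\<otimes>..\<otimes>x) with the unit vector e_c in position j.\<close>
definition PR_jac :: "nat \<Rightarrow> ('n::finite list \<Rightarrow> real) \<Rightarrow> real \<Rightarrow> real ^ 'n \<Rightarrow> real ^ 'n ^ 'n" where
  "PR_jac m P \<alpha> x = (\<chi> i c. \<alpha> * (\<Sum>j<m - 1.
        flat_apply P ((replicate (m - 1) x)[j := axis c 1]) $ i)) - mat 1"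

primrec newton_seq :: "nat \<Rightarrow> ('n::finite list \<Rightarrow> real) \<Rightarrow> real \<Rightarrow> real ^ 'n \<Rightarrow> nat \<Rightarrow> real ^ 'n" where
  "newton_seq m P \<alpha> v 0 = 0"
| "newton_seq m P \<alpha> v (Suc k) =
     newton_seq m P \<alpha> v k -
       matrix_inv (PR_jac m P \<alpha> (newton_seq m P \<alpha> v k)) *v PR_f m P \<alpha> v (newton_seq m P \<alpha> v k)"

end

theory Submission
  imports Defs
begin

definition Fm :: "('n::finite list \<Rightarrow> real) \<Rightarrow> nat \<Rightarrow> (nat \<Rightarrow> real ^ 'n) \<Rightarrow> 'n \<Rightarrow> real" where
  "Fm P n ys i = (\<Sum>is\<in>{is. length is = n}. P (i # is) * (\<Prod>l<n. ys l $ (is ! l)))"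

lemma fin_lists: "finite {is::'n::finite list. length is = k}"
  using finite_lists_length_eq[of "UNIV::'n set" k] by simp

lemma Fm_cong: "(\<And>l. l < n \<Longrightarrow> ys l = zs l) \<Longrightarrow> Fm P n ys i = Fm P n zs i"
  unfolding Fm_def by (intro sum.cong refl arg_cong2[where f="(*)"] prod.cong) auto

definition Qm :: "nat \<Rightarrow> (nat \<Rightarrow> real ^ 'n) \<Rightarrow> nat \<Rightarrow> 'n list \<Rightarrow> real" where
  "Qm n ys j is = (\<Prod>l\<in>{..<n}-{j}. ys l $ (is ! l))"

lemma prod_slot: "j < n \<Longrightarrow> (\<Prod>l<n. (ys(j:=w)) l $ (is ! l)) = w $ (is ! j) * Qm n ys j is"
proof -
  assume j: "j < n"
  have "(\<Prod>l<n. (ys(j:=w)) l $ (is ! l)) = (ys(j:=w)) j $ (is ! j) * (\<Prod>l\<in>{..<n}-{j}. (ys(j:=w)) l $ (is ! l))"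
    using j by (subst prod.remove[of "{..<n}" j]) auto
  also have "(\<Prod>l\<in>{..<n}-{j}. (ys(j:=w)) l $ (is ! l)) = Qm n ys j is"
    unfolding Qm_def by (rule prod.cong) auto
  finally show ?thesis by simp
qed

lemma Fm_slot: "j < n \<Longrightarrow> Fm P n (ys(j:=w)) i = (\<Sum>is\<in>{is. length is = n}. P (i # is) * (w $ (is ! j)) * Qm n ys j is)"
  unfolding Fm_def by (rule sum.cong[OF refl]) (simp only: prod_slot mult.assoc)

lemma Fm_diff: "j < n \<Longrightarrow> Fm P n (ys(j:=u - w)) i = Fm P n (ys(j:=u)) i - Fm P n (ys(j:=w)) i"
  by (simp add: Fm_slot sum_subtractf[symmetric] algebra_simps)

lemma Fm_minus: "j < n \<Longrightarrow> Fm P n (ys(j:= - w)) i = - Fm P n (ys(j:=w)) i"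
  by (simp add: Fm_slot sum_negf[symmetric] algebra_simps)

lemma Fm_lincomb: "j < n \<Longrightarrow> (\<Sum>c\<in>UNIV. Fm P n (ys(j:=u c)) i * d $ c) =
   (\<Sum>is\<in>{is. length is = n}. P (i # is) * (\<Sum>c\<in>UNIV. u c $ (is ! j) * d $ c) * Qm n ys j is)"
  by (simp add: Fm_slot sum_distrib_left sum_distrib_right sum.swap[of _ UNIV] algebra_simps)

lemma sum_lists_prod:
  fixes h :: "nat \<Rightarrow> 'n::finite \<Rightarrow> real"
  shows "(\<Sum>is\<in>{is. length is = n}. \<Prod>l<n. h l (is ! l)) = (\<Prod>l<n. \<Sum>k\<in>UNIV. h l k)"
proof (induction n arbitrary: h)
  case 0
  then show ?case by simp
next
  case (Suc n)
  have eq: "{is::'n list. length is = Suc n} = (\<lambda>(k,is). k # is) ` (UNIV \<times> {is. length is = n})"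
    by (auto simp: image_iff length_Suc_conv)
  have inj: "inj_on (\<lambda>(k,is). k # is) (UNIV \<times> {is::'n list. length is = n})"
    by (auto simp: inj_on_def)
  have "(\<Sum>is\<in>{is. length is = Suc n}. \<Prod>l<Suc n. h l (is ! l))
      = (\<Sum>(k,is)\<in>UNIV \<times> {is::'n list. length is = n}. \<Prod>l<Suc n. h l ((k#is) ! l))"
    unfolding eq by (subst sum.reindex[OF inj]) (simp add: case_prod_unfold)
  also have "\<dots> = (\<Sum>k\<in>UNIV. \<Sum>is\<in>{is::'n list. length is = n}. h 0 k * (\<Prod>l<n. h (Suc l) (is ! l)))"
    by (subst sum.cartesian_product[symmetric]) (simp del: prod.lessThan_Suc add: prod.lessThan_Suc_shift)
  also have "\<dots> = (\<Sum>k\<in>UNIV. h 0 k) * (\<Prod>l<n. \<Sum>k\<in>UNIV. h (Suc l) k)"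
    using Suc[of "\<lambda>l. h (Suc l)"] by (simp add: sum_distrib_left[symmetric] sum_distrib_right)
  also have "\<dots> = (\<Prod>l<Suc n. \<Sum>k\<in>UNIV. h l k)"
    by (simp del: prod.lessThan_Suc add: prod.lessThan_Suc_shift)
  finally show ?case .
qed

lemma Fm_sum:
  assumes st: "\<And>is. length is = n \<Longrightarrow> (\<Sum>i\<in>UNIV. P (i # is)) = 1"
  shows "(\<Sum>i\<in>UNIV. Fm P n ys i) = (\<Prod>l<n. \<Sum>k\<in>UNIV. ys l $ k)"
proof -
  have "(\<Sum>i\<in>UNIV. Fm P n ys i) = (\<Sum>is\<in>{is. length is = n}. (\<Sum>i\<in>UNIV. P (i # is)) * (\<Prod>l<n. ys l $ (is ! l)))"
    unfolding Fm_def by (simp add: sum.swap[of _ UNIV] sum_distrib_right)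
  also have "\<dots> = (\<Sum>is\<in>{is. length is = n}. (\<Prod>l<n. ys l $ (is ! l)))"
    by (rule sum.cong) (auto simp: st)
  also have "\<dots> = (\<Prod>l<n. \<Sum>k\<in>UNIV. ys l $ k)"
    by (rule sum_lists_prod)
  finally show ?thesis .
qed

lemma Fm_mono:
  assumes nn: "\<And>is. length is = Suc n \<Longrightarrow> P is \<ge> 0"
    and le: "\<And>l k. l < n \<Longrightarrow> 0 \<le> ys l $ k \<and> ys l $ k \<le> zs l $ k"
  shows "0 \<le> Fm P n ys i \<and> Fm P n ys i \<le> Fm P n zs i"
proof
  show "0 \<le> Fm P n ys i" unfolding Fm_def
    using nn le by (intro sum_nonneg mult_nonneg_nonneg prod_nonneg) auto
  show "Fm P n ys i \<le> Fm P n zs i" unfolding Fm_def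
    using nn le by (intro sum_mono mult_left_mono prod_mono) auto
qed

lemma Fm_tendsto:
  assumes "\<And>l. l < n \<Longrightarrow> (\<lambda>k. Y k l) \<longlonglongrightarrow> Z l"
  shows "(\<lambda>k. Fm P n (Y k) i) \<longlonglongrightarrow> Fm P n Z i"
  unfolding Fm_def using assms
  by (intro tendsto_sum tendsto_mult tendsto_const tendsto_prod tendsto_vec_nth) auto


definition Jm :: "('n::finite list \<Rightarrow> real) \<Rightarrow> nat \<Rightarrow> real ^ 'n \<Rightarrow> real ^ 'n \<Rightarrow> 'n \<Rightarrow> real" where
  "Jm P n x d i = (\<Sum>j<n. Fm P n ((\<lambda>_. x)(j:=d)) i)"

lemma Jm_diff: "Jm P n x (u - w) i = Jm P n x u i - Jm P n x w i"
  unfolding Jm_def by (simp add: Fm_diff sum_subtractf[symmetric])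

lemma Jm_minus: "Jm P n x (- w) i = - Jm P n x w i"
  unfolding Jm_def by (simp add: Fm_minus sum_negf[symmetric])

lemma Jm_sum:
  assumes st: "\<And>is. length is = n \<Longrightarrow> (\<Sum>i\<in>UNIV. P (i # is)) = 1"
  shows "(\<Sum>i\<in>UNIV. Jm P n x d i) = real n * (\<Sum>k\<in>UNIV. x $ k) ^ (n - 1) * (\<Sum>k\<in>UNIV. d $ k)"
proof -
  have "(\<Sum>i\<in>UNIV. Jm P n x d i) = (\<Sum>j<n. \<Sum>i\<in>UNIV. Fm P n ((\<lambda>_. x)(j:=d)) i)"
    unfolding Jm_def by (rule sum.swap)
  also have "\<dots> = (\<Sum>j<n. (\<Sum>k\<in>UNIV. x $ k) ^ (n - 1) * (\<Sum>k\<in>UNIV. d $ k))"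
  proof (rule sum.cong[OF refl])
    fix j assume j: "j \<in> {..<n}"
    have "(\<Sum>i\<in>UNIV. Fm P n ((\<lambda>_. x)(j:=d)) i) = (\<Prod>l<n. \<Sum>k\<in>UNIV. ((\<lambda>_. x)(j:=d)) l $ k)"
      by (rule Fm_sum[OF st])
    also have "\<dots> = (\<Sum>k\<in>UNIV. d $ k) * (\<Prod>l\<in>{..<n}-{j}. \<Sum>k\<in>UNIV. ((\<lambda>_. x)(j:=d)) l $ k)"
      using j by (subst prod.remove[of "{..<n}" j]) auto
    also have "(\<Prod>l\<in>{..<n}-{j}. \<Sum>k\<in>UNIV. ((\<lambda>_. x)(j:=d)) l $ k) = (\<Prod>l\<in>{..<n}-{j}. \<Sum>k\<in>UNIV. x $ k)"
      by (rule prod.cong) auto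
    also have "\<dots> = (\<Sum>k\<in>UNIV. x $ k) ^ (n - 1)"
      using j by simp
    finally show "(\<Sum>i\<in>UNIV. Fm P n ((\<lambda>_. x)(j:=d)) i) = (\<Sum>k\<in>UNIV. x $ k) ^ (n - 1) * (\<Sum>k\<in>UNIV. d $ k)"
      by (metis mult.commute)
  qed
  also have "\<dots> = real n * (\<Sum>k\<in>UNIV. x $ k) ^ (n - 1) * (\<Sum>k\<in>UNIV. d $ k)"
    by simp
  finally show ?thesis .
qed

lemma Jm_mono:
  assumes nn: "\<And>is. length is = Suc n \<Longrightarrow> P is \<ge> 0"
    and x: "\<And>k. 0 \<le> x $ k" and d: "\<And>k. 0 \<le> d $ k \<and> d $ k \<le> d' $ k"
  shows "0 \<le> Jm P n x d i \<and> Jm P n x d i \<le> Jm P n x d' i"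
proof -
  have "\<And>j. j < n \<Longrightarrow> 0 \<le> Fm P n ((\<lambda>_. x)(j:=d)) i \<and> Fm P n ((\<lambda>_. x)(j:=d)) i \<le> Fm P n ((\<lambda>_. x)(j:=d')) i"
    by (rule Fm_mono[OF nn]) (auto simp: x d)
  then show ?thesis unfolding Jm_def
    by (auto intro!: sum_nonneg sum_mono)
qed

lemma R_pow_Fm: "R_pow m P x $ i = Fm P (m - 1) (\<lambda>_. x) i"
  unfolding R_pow_def flat_apply_def Fm_def
  by (auto intro!: sum.cong prod.cong arg_cong2[where f="(*)"])

lemma flat_upd: "j < n \<Longrightarrow> flat_apply P ((replicate n x)[j := a]) $ i = Fm P n ((\<lambda>_. x)(j:=a)) i"
  unfolding flat_apply_def Fm_def
  by (auto intro!: sum.cong prod.cong arg_cong2[where f="(*)"] simp: nth_list_update)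

lemma axis_sum: "(\<Sum>c\<in>UNIV. axis c (1::real) $ k * d $ c) = d $ k"
proof -
  have eq1: "\<And>c. axis c (1::real) $ k * d $ c = (if c = k then d $ c else 0)"
    by (auto simp: axis_def)
  have eq2: "(\<Sum>c\<in>UNIV. if c = k then d $ c else 0) = d $ k" by simp
  show ?thesis by (simp only: eq1 eq2)
qed

lemma jac_mult: "(PR_jac m P \<alpha> x *v d) $ i = \<alpha> * Jm P (m - 1) x d i - d $ i"
proof -
  let ?n = "m - 1"
  have "((\<chi> i c. \<alpha> * (\<Sum>j<?n. flat_apply P ((replicate ?n x)[j := axis c 1]) $ i)) *v d) $ i
     = (\<Sum>c\<in>UNIV. \<alpha> * (\<Sum>j<?n. Fm P ?n ((\<lambda>_. x)(j:=axis c 1)) i) * d $ c)"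
    by (simp add: matrix_vector_mult_def flat_upd)
  also have "\<dots> = \<alpha> * (\<Sum>j<?n. \<Sum>c\<in>UNIV. Fm P ?n ((\<lambda>_. x)(j:=axis c 1)) i * d $ c)"
    by (simp add: sum_distrib_left sum_distrib_right sum.swap[of _ UNIV] mult.assoc)
  also have "\<dots> = \<alpha> * Jm P ?n x d i"
    unfolding Jm_def
  proof (intro arg_cong2[where f="(*)"] refl sum.cong)
    fix j assume j: "j \<in> {..<?n}"
    show "(\<Sum>c\<in>UNIV. Fm P ?n ((\<lambda>_. x)(j:=axis c 1)) i * d $ c) = Fm P ?n ((\<lambda>_. x)(j:=d)) i"
      proof -
      have jj: "j < ?n" using j by simp
      show ?thesis by (subst Fm_lincomb[OF jj, of P "\<lambda>_. x" "\<lambda>c. axis c 1" i d]) (subst Fm_slot[OF jj], simp add: axis_sum)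
    qed
  qed
  finally show ?thesis
    unfolding PR_jac_def by (simp add: matrix_vector_mult_diff_rdistrib)
qed


lemma minv_right: "invertible A \<Longrightarrow> A ** matrix_inv A = mat 1"
  unfolding invertible_def matrix_inv_def by (rule someI2_ex) auto

lemma pos_lemma:
  assumes nn: "\<And>is. length is = Suc n \<Longrightarrow> P is \<ge> 0"
    and st: "\<And>is. length is = n \<Longrightarrow> (\<Sum>i\<in>UNIV. P (i # is)) = 1"
    and x0: "\<And>k. 0 \<le> x $ k" and x1: "(\<Sum>k\<in>UNIV. x $ k) \<le> 1"
    and a0: "0 \<le> a" and an: "a * real n < 1"
    and z: "\<And>i. z $ i = a * Jm P n x z i + b $ i" and b: "\<And>i. 0 \<le> b $ i"
  shows "0 \<le> z $ i"
proof -
  define w where "w = (\<chi> i. max (- z $ i) 0)"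
  define zp where "zp = (\<chi> i. max (z $ i) 0)"
  have zeq: "z = zp - w" unfolding w_def zp_def by (auto simp: vec_eq_iff)
  have w0: "\<And>k. 0 \<le> w $ k" unfolding w_def by simp
  have zp0: "\<And>k. 0 \<le> zp $ k" unfolding zp_def by simp
  have Jw0: "\<And>k. 0 \<le> Jm P n x w k" using Jm_mono[OF nn x0, where d=w and d'=w] w0 by auto
  have Jzp0: "\<And>k. 0 \<le> Jm P n x zp k" using Jm_mono[OF nn x0, where d=zp and d'=zp] zp0 by auto
  have wle: "w $ k \<le> a * Jm P n x w k" for k
  proof (cases "z $ k < 0")
    case True
    have J: "Jm P n x z k = Jm P n x zp k - Jm P n x w k" using zeq Jm_diff by metis
    have wk: "w $ k = - z $ k" using True unfolding w_def by simp
    have "w $ k = - (a * Jm P n x zp k) + a * Jm P n x w k - b $ k"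
      using z[of k] J wk by (simp add: algebra_simps)
    moreover have "0 \<le> a * Jm P n x zp k" using a0 Jzp0 by simp
    ultimately show ?thesis using b[of k] by linarith
  next
    case False
    then have "w $ k = 0" unfolding w_def by simp
    then show ?thesis using a0 Jw0[of k] by simp
  qed
  define s where "s = (\<Sum>k\<in>UNIV. x $ k)"
  have s0: "0 \<le> s" unfolding s_def using x0 by (simp add: sum_nonneg)
  have s1: "s ^ (n - 1) \<le> 1" using s0 x1 unfolding s_def by (simp add: power_le_one)
  have c1: "a * real n * s ^ (n - 1) < 1"
  proof -
    have "a * real n * s ^ (n - 1) \<le> a * real n"
      using s1 a0 s0 by (simp add: mult_left_le)
    then show ?thesis using an by linarith
  qed
  have "(\<Sum>k\<in>UNIV. w $ k) \<le> (\<Sum>k\<in>UNIV. a * Jm P n x w k)"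
    by (rule sum_mono) (rule wle)
  also have "\<dots> = a * real n * s ^ (n - 1) * (\<Sum>k\<in>UNIV. w $ k)"
    by (simp add: sum_distrib_left[symmetric] Jm_sum[OF st] s_def mult.assoc)
  finally have "(1 - a * real n * s ^ (n - 1)) * (\<Sum>k\<in>UNIV. w $ k) \<le> 0"
    by (simp add: algebra_simps)
  moreover have "0 \<le> (\<Sum>k\<in>UNIV. w $ k)" using w0 by (simp add: sum_nonneg)
  ultimately have "(\<Sum>k\<in>UNIV. w $ k) = 0"
    using c1 by (smt (verit) mult_pos_pos)
  then have "w $ i = 0" using w0 by (simp add: sum_nonneg_eq_0_iff)
  then show ?thesis unfolding w_def by simp
qed

lemma convex_lemma:
  assumes nn: "\<And>is. length is = Suc n \<Longrightarrow> P is \<ge> 0"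
    and x0: "\<And>k. 0 \<le> x $ k" and xy: "\<And>k. x $ k \<le> y $ k"
  shows "Jm P n x (y - x) i \<le> Fm P n (\<lambda>_. y) i - Fm P n (\<lambda>_. x) i"
proof -
  define T where "T j = (\<lambda>l::nat. if l < j then y else x)" for j
  have "Fm P n (\<lambda>_. y) i - Fm P n (\<lambda>_. x) i = Fm P n (T n) i - Fm P n (T 0) i"
    by (intro arg_cong2[where f="(-)"] Fm_cong) (auto simp: T_def)
  also have "\<dots> = (\<Sum>j<n. Fm P n (T (Suc j)) i - Fm P n (T j) i)"
    by (rule sum_lessThan_telescope[symmetric])
  also have "\<dots> = (\<Sum>j<n. Fm P n ((T j)(j := y - x)) i)"
  proof (rule sum.cong[OF refl])
    fix j assume j: "j \<in> {..<n}"
    have "T (Suc j) = (T j)(j := y)" "T j = (T j)(j := x)" by (auto simp: T_def fun_eq_iff)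
    then show "Fm P n (T (Suc j)) i - Fm P n (T j) i = Fm P n ((T j)(j := y - x)) i"
      using j Fm_diff[of j n P "T j" y x i] by simp
  qed
  finally have eq: "Fm P n (\<lambda>_. y) i - Fm P n (\<lambda>_. x) i = (\<Sum>j<n. Fm P n ((T j)(j := y - x)) i)" .
  show ?thesis unfolding eq Jm_def
  proof (rule sum_mono)
    fix j assume j: "j \<in> {..<n}"
    show "Fm P n ((\<lambda>_. x)(j := y - x)) i \<le> Fm P n ((T j)(j := y - x)) i"
    proof -
      have y0: "\<And>k. 0 \<le> y $ k" using x0 xy order_trans by blast
      have "\<And>l k. l < n \<Longrightarrow> 0 \<le> ((\<lambda>_. x)(j := y - x)) l $ k \<and> ((\<lambda>_. x)(j := y - x)) l $ k \<le> ((T j)(j := y - x)) l $ k"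
        using x0 xy y0 by (auto simp: T_def)
      then have "0 \<le> Fm P n ((\<lambda>_. x)(j := y - x)) i \<and> Fm P n ((\<lambda>_. x)(j := y - x)) i \<le> Fm P n ((T j)(j := y - x)) i"
        by (intro Fm_mono[where ys="(\<lambda>_. x)(j := y - x)" and zs="(T j)(j := y - x)"] nn) auto
      then show ?thesis by blast
    qed
  qed
qed

lemma scalar_ineq:
  fixes s s' a :: real and n :: nat
  assumes "0 \<le> s" "s \<le> 1" "n \<ge> 1" "0 \<le> a" "a * n < 1"
    and eq: "s' = a * s ^ n + (1 - a) + a * n * s ^ (n - 1) * (s' - s)"
  shows "s' \<le> 1"
proof -
  have key: "real n * s ^ (n - 1) * (1 - s) \<le> 1 - s ^ n"
  proof -
    have "real n * s ^ (n - 1) = (\<Sum>i<n. s ^ (n - 1))" by simp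
    also have "\<dots> \<le> (\<Sum>i<n. s ^ i)"
      by (rule sum_mono) (use assms in \<open>auto intro: power_decreasing\<close>)
    finally have "real n * s ^ (n - 1) * (1 - s) \<le> (\<Sum>i<n. s ^ i) * (1 - s)"
      using assms by (intro mult_right_mono) auto
    also have "\<dots> = 1 - s ^ n" by (simp add: one_diff_power_eq)
    finally show ?thesis .
  qed
  have c: "a * n * s ^ (n - 1) < 1"
  proof -
    have "s ^ (n - 1) \<le> 1" using assms by (simp add: power_le_one)
    then have "a * n * s ^ (n - 1) \<le> a * n" using assms by (simp add: mult_left_le)
    then show ?thesis using assms by linarith
  qed
  have "(1 - a * n * s ^ (n - 1)) * (s' - 1) = a * (s ^ n - 1 + real n * s ^ (n - 1) * (1 - s))"
    using eq by (simp add: algebra_simps)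
  also have "\<dots> \<le> 0" using key assms by (simp add: mult_nonneg_nonpos)
  finally show ?thesis using c by (smt (verit) mult_pos_pos)
qed


locale PRc =
  fixes m :: nat and P :: "'n::finite list \<Rightarrow> real" and v :: "real ^ 'n" and \<alpha> :: real
  assumes m2: "m \<ge> 2" and tpt: "transition_probability_tensor m P" and sv: "stochastic v"
    and a0: "0 \<le> \<alpha>" and a1: "\<alpha> < 1" and a2: "\<alpha> < 1 / (real m - 1)"
begin

lemma nn: "length is = Suc (m - 1) \<Longrightarrow> 0 \<le> P is"
  using tpt m2 unfolding transition_probability_tensor_def by auto

lemma st: "length is = m - 1 \<Longrightarrow> (\<Sum>i\<in>UNIV. P (i # is)) = 1"
  using tpt unfolding transition_probability_tensor_def by auto

lemma an: "\<alpha> * real (m - 1) < 1"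
proof -
  have "real (m - 1) = real m - 1" using m2 by simp
  moreover have "real m - 1 > 0" using m2 by simp
  ultimately show ?thesis using a2 by (simp add: pos_less_divide_eq)
qed

lemma v0: "0 \<le> v $ i" using sv unfolding stochastic_def by auto
lemma vs: "(\<Sum>i\<in>UNIV. v $ i) = 1" using sv unfolding stochastic_def by auto

definition g :: "real ^ 'n \<Rightarrow> real ^ 'n" where
  "g x = \<alpha> *\<^sub>R R_pow m P x + (1 - \<alpha>) *\<^sub>R v"

lemma g_comp: "g x $ i = \<alpha> * Fm P (m - 1) (\<lambda>_. x) i + (1 - \<alpha>) * v $ i"
  by (simp add: g_def R_pow_Fm)

lemma g_sum: "(\<Sum>i\<in>UNIV. g x $ i) = \<alpha> * (\<Sum>k\<in>UNIV. x $ k) ^ (m - 1) + (1 - \<alpha>)"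
proof -
  have "(\<Sum>i\<in>UNIV. g x $ i) = \<alpha> * (\<Sum>i\<in>UNIV. Fm P (m - 1) (\<lambda>_. x) i) + (1 - \<alpha>) * (\<Sum>i\<in>UNIV. v $ i)"
    by (simp add: g_comp sum.distrib sum_distrib_left)
  also have "\<dots> = \<alpha> * (\<Sum>k\<in>UNIV. x $ k) ^ (m - 1) + (1 - \<alpha>)"
    by (simp add: Fm_sum[OF st] vs)
  finally show ?thesis .
qed

lemma f_eq: "PR_f m P \<alpha> v x = g x - x"
  by (simp add: PR_f_def g_def)

lemma jac_invertible:
  assumes x0: "\<And>i. 0 \<le> x $ i" and x1: "(\<Sum>k\<in>UNIV. x $ k) \<le> 1"
  shows "invertible (PR_jac m P \<alpha> x)"
proof -
  have "\<forall>z. PR_jac m P \<alpha> x *v z = 0 \<longrightarrow> z = 0"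
  proof (intro allI impI)
    fix z assume h: "PR_jac m P \<alpha> x *v z = 0"
    have z: "z $ i = \<alpha> * Jm P (m - 1) x z i + (0::real^'n) $ i" for i
      using arg_cong[OF h, of "\<lambda>u. u $ i"] by (simp add: jac_mult)
    have zp: "0 \<le> z $ i" for i
      using pos_lemma[OF nn st x0 x1 a0 an z, of i] by (simp add: zero_index)
    have z': "(- z) $ i = \<alpha> * Jm P (m - 1) x (- z) i + (0::real^'n) $ i" for i
      using z[of i] by (simp add: Jm_minus)
    have zn: "0 \<le> (- z) $ i" for i
      using pos_lemma[OF nn st x0 x1 a0 an z', of i] by (simp add: zero_index)
    show "z = 0" using zp zn by (auto simp: vec_eq_iff intro: antisym)
  qed
  then show ?thesis
    by (simp add: invertible_left_inverse matrix_left_invertible_ker)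
qed

lemma newton_eq:
  assumes inv: "invertible (PR_jac m P \<alpha> x)"
    and x': "x' = x - matrix_inv (PR_jac m P \<alpha> x) *v PR_f m P \<alpha> v x"
  shows "x' $ i = g x $ i + \<alpha> * Jm P (m - 1) x (x' - x) i"
proof -
  let ?A = "PR_jac m P \<alpha> x"
  have neg: "?A *v (- u) = - (?A *v u)" for u
    by (simp add: vec_eq_iff matrix_vector_mult_def sum_negf[symmetric])
  have "x' - x = - (matrix_inv ?A *v PR_f m P \<alpha> v x)" using x' by simp
  then have "?A *v (x' - x) = - (?A *v (matrix_inv ?A *v PR_f m P \<alpha> v x))"
    by (simp only: neg)
  also have "\<dots> = - PR_f m P \<alpha> v x"
    by (simp add: matrix_vector_mul_assoc minv_right[OF inv])
  finally have "(?A *v (x' - x)) $ i = - (PR_f m P \<alpha> v x) $ i" by simp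
  then show ?thesis by (simp add: jac_mult f_eq Jm_diff algebra_simps)
qed

definition Inv :: "real ^ 'n \<Rightarrow> bool" where
  "Inv x \<longleftrightarrow> (\<forall>i. 0 \<le> x $ i) \<and> (\<Sum>k\<in>UNIV. x $ k) \<le> 1 \<and> (\<forall>i. x $ i \<le> g x $ i)"

lemma step:
  assumes I: "Inv x"
    and x': "x' = x - matrix_inv (PR_jac m P \<alpha> x) *v PR_f m P \<alpha> v x"
  shows "Inv x' \<and> (\<forall>i. x $ i \<le> x' $ i)"
proof -
  have x0: "\<And>i. 0 \<le> x $ i" and x1: "(\<Sum>k\<in>UNIV. x $ k) \<le> 1" and xg: "\<And>i. x $ i \<le> g x $ i"
    using I unfolding Inv_def by auto
  have inv: "invertible (PR_jac m P \<alpha> x)" by (rule jac_invertible[OF x0 x1])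
  note eq = newton_eq[OF inv x']
  define d where "d = x' - x"
  have deq: "d $ i = \<alpha> * Jm P (m - 1) x d i + (g x - x) $ i" for i
    using eq[of i] unfolding d_def by simp
  have d0: "0 \<le> d $ i" for i
    using pos_lemma[OF nn st x0 x1 a0 an deq, of i] by (simp add: xg)
  have mono: "x $ i \<le> x' $ i" for i using d0[of i] unfolding d_def by simp
  have x'0: "0 \<le> x' $ i" for i using mono[of i] x0[of i] by simp
  have x'g: "x' $ i \<le> g x' $ i" for i
  proof -
    have "Jm P (m - 1) x (x' - x) i \<le> Fm P (m - 1) (\<lambda>_. x') i - Fm P (m - 1) (\<lambda>_. x) i"
      by (rule convex_lemma[OF nn x0 mono])
    then have "\<alpha> * Jm P (m - 1) x (x' - x) i \<le> \<alpha> * (Fm P (m - 1) (\<lambda>_. x') i - Fm P (m - 1) (\<lambda>_. x) i)"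
      using a0 by (simp add: mult_left_mono)
    then show ?thesis using eq[of i] by (simp add: g_comp algebra_simps)
  qed
  define s where "s = (\<Sum>k\<in>UNIV. x $ k)"
  define s' where "s' = (\<Sum>k\<in>UNIV. x' $ k)"
  have s0: "0 \<le> s" unfolding s_def using x0 by (simp add: sum_nonneg)
  have sd: "(\<Sum>k\<in>UNIV. d $ k) = s' - s" unfolding s_def s'_def d_def by (simp add: sum_subtractf)
  have "s' = (\<Sum>i\<in>UNIV. g x $ i) + \<alpha> * (\<Sum>i\<in>UNIV. Jm P (m - 1) x d i)"
    unfolding s'_def using eq unfolding d_def[symmetric] by (simp add: sum.distrib sum_distrib_left)
  also have "\<dots> = \<alpha> * s ^ (m - 1) + (1 - \<alpha>) + \<alpha> * real (m - 1) * s ^ (m - 1 - 1) * (s' - s)"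
    by (simp add: g_sum Jm_sum[OF st] sd s_def[symmetric] mult.assoc)
  finally have "s' = \<alpha> * s ^ (m - 1) + (1 - \<alpha>) + \<alpha> * real (m - 1) * s ^ (m - 1 - 1) * (s' - s)" .
  moreover have s1: "s \<le> 1" using x1 s_def by simp
  moreover have n1: "1 \<le> m - 1" using m2 by simp
  ultimately have "s' \<le> 1"
    using scalar_ineq[OF s0 s1 n1 a0 an] by blast
  then show ?thesis unfolding Inv_def s'_def using x'0 x'g mono by auto
qed


abbreviation xs :: "nat \<Rightarrow> real ^ 'n" where "xs k \<equiv> newton_seq m P \<alpha> v k"

lemma Inv0: "Inv 0"
proof -
  have "0 \<le> g 0 $ i" for i
    unfolding g_comp using Fm_mono[OF nn, where ys="\<lambda>_. 0" and zs="\<lambda>_. 0" and i=i] a0 a1 v0[of i]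
    by (auto intro!: add_nonneg_nonneg mult_nonneg_nonneg)
  then show ?thesis unfolding Inv_def by simp
qed

lemma Inv_all: "Inv (xs k) \<and> (\<forall>i. xs k $ i \<le> xs (Suc k) $ i)"
proof (induction k)
  case 0
  show ?case using Inv0 step[OF Inv0 refl] by simp
next
  case (Suc k)
  then have "Inv (xs (Suc k))" using step[OF _ refl] by simp
  then show ?case using step[OF _ refl] by simp
qed

lemma xs_inv: "invertible (PR_jac m P \<alpha> (xs k))"
  using Inv_all[of k] jac_invertible unfolding Inv_def by blast

lemma xs_eq: "xs (Suc k) $ i = g (xs k) $ i + \<alpha> * Jm P (m - 1) (xs k) (xs (Suc k) - xs k) i"
  by (rule newton_eq[OF xs_inv]) simp

lemma xs_le_y:
  assumes ys: "stochastic y" and yg: "y = g y"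
  shows "xs k $ i \<le> y $ i"
proof (induction k arbitrary: i)
  case 0
  then show ?case using ys unfolding stochastic_def by simp
next
  case (Suc k)
  define x where "x = xs k"
  define x' where "x' = xs (Suc k)"
  have x0: "\<And>i. 0 \<le> x $ i" and x1: "(\<Sum>k\<in>UNIV. x $ k) \<le> 1"
    using Inv_all[of k] unfolding Inv_def x_def by auto
  have xy: "\<And>i. x $ i \<le> y $ i" using Suc unfolding x_def .
  define e where "e = y - x'"
  define b where "b = (\<chi> i. \<alpha> * (Fm P (m - 1) (\<lambda>_. y) i - Fm P (m - 1) (\<lambda>_. x) i - Jm P (m - 1) x (y - x) i))"
  have b0: "0 \<le> b $ i" for i
    unfolding b_def using convex_lemma[OF nn x0 xy, where i=i] a0 by simp
  have J: "Jm P (m - 1) x (y - x') i = Jm P (m - 1) x (y - x) i - Jm P (m - 1) x (x' - x) i" for i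
  proof -
    have "y - x' = (y - x) - (x' - x)" by simp
    then show ?thesis using Jm_diff by metis
  qed
  have eeq: "e $ i = \<alpha> * Jm P (m - 1) x e i + b $ i" for i
  proof -
    have "y $ i = g y $ i" using yg by simp
    moreover have "x' $ i = g x $ i + \<alpha> * Jm P (m - 1) x (x' - x) i"
      unfolding x_def x'_def by (rule xs_eq)
    moreover have J': "\<alpha> * Jm P (m - 1) x (y - x) i = \<alpha> * Jm P (m - 1) x (x' - x) i + \<alpha> * Jm P (m - 1) x (y - x') i"
      unfolding J[of i] by (simp add: algebra_simps)
    ultimately show ?thesis unfolding e_def b_def
      by (simp add: g_comp right_diff_distrib; linarith)
  qed
  have "0 \<le> e $ i" using pos_lemma[OF nn st x0 x1 a0 an eeq, of i] b0 by blast
  then show ?case unfolding e_def x'_def by simp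
qed

lemma main:
  "(\<forall>k. invertible (PR_jac m P \<alpha> (xs k))) \<and>
   (\<exists>x. stochastic x \<and> x = g x \<and> (\<forall>y. stochastic y \<and> y = g y \<longrightarrow> y = x) \<and> xs \<longlonglongrightarrow> x)"
proof -
  have mono: "xs k $ i \<le> xs (Suc k) $ i" for k i using Inv_all[of k] by blast
  have nonneg: "0 \<le> xs k $ i" for k i using Inv_all[of k] unfolding Inv_def by blast
  have le1: "xs k $ i \<le> 1" for k i
  proof -
    have "xs k $ i \<le> (\<Sum>j\<in>UNIV. xs k $ j)"
      by (rule member_le_sum) (auto simp: nonneg)
    also have "\<dots> \<le> 1" using Inv_all[of k] unfolding Inv_def by blast
    finally show ?thesis .
  qed
  define L where "L = (\<chi> i. SUP k. xs k $ i)"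
  have convi: "(\<lambda>k. xs k $ i) \<longlonglongrightarrow> L $ i" for i
    unfolding L_def vec_lambda_beta
  proof (rule LIMSEQ_incseq_SUP)
    show "bdd_above (range (\<lambda>k. xs k $ i))" using le1 by (auto simp: bdd_above_def)
    show "incseq (\<lambda>k. xs k $ i)" by (rule incseq_SucI) (rule mono)
  qed
  have conv: "xs \<longlonglongrightarrow> L" by (rule vec_tendstoI) (rule convi)
  have L0: "0 \<le> L $ i" for i by (rule LIMSEQ_le_const[OF convi]) (auto simp: nonneg)
  have Ls: "(\<lambda>k. \<Sum>i\<in>UNIV. xs k $ i) \<longlonglongrightarrow> (\<Sum>i\<in>UNIV. L $ i)"
    by (intro tendsto_sum convi)
  have L1: "(\<Sum>i\<in>UNIV. L $ i) \<le> 1"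
    by (rule LIMSEQ_le_const2[OF Ls]) (use Inv_all in \<open>auto simp: Inv_def\<close>)
  have Lfix: "L $ i = g L $ i" for i
  proof -
    have lim1: "(\<lambda>k. xs (Suc k) $ i) \<longlonglongrightarrow> L $ i"
      using convi[of i] by (rule LIMSEQ_Suc)
    have t1: "(\<lambda>k. Fm P (m - 1) (\<lambda>_. xs k) i) \<longlonglongrightarrow> Fm P (m - 1) (\<lambda>_. L) i"
      by (rule Fm_tendsto) (rule conv)
    have dconv: "(\<lambda>k. xs (Suc k) - xs k) \<longlonglongrightarrow> L - L"
      by (intro tendsto_diff conv LIMSEQ_Suc[OF conv])
    have t2: "(\<lambda>k. Jm P (m - 1) (xs k) (xs (Suc k) - xs k) i) \<longlonglongrightarrow> Jm P (m - 1) L (L - L) i"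
      unfolding Jm_def
    proof (intro tendsto_sum Fm_tendsto)
      fix j l
      show "(\<lambda>k. ((\<lambda>_. xs k)(j := xs (Suc k) - xs k)) l) \<longlonglongrightarrow> ((\<lambda>_. L)(j := L - L)) l"
        by (cases "l = j") (use conv dconv in \<open>simp_all del: newton_seq.simps\<close>)
    qed
    have J0: "Jm P (m - 1) L (L - L) i = 0"
      using Jm_diff[of P "m - 1" L L L i] by simp
    have lim2: "(\<lambda>k. xs (Suc k) $ i) \<longlonglongrightarrow> g L $ i"
    proof -
      have "(\<lambda>k. g (xs k) $ i + \<alpha> * Jm P (m - 1) (xs k) (xs (Suc k) - xs k) i)
          \<longlonglongrightarrow> g L $ i + \<alpha> * Jm P (m - 1) L (L - L) i"
        unfolding g_comp by (intro tendsto_intros t1 t2)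
      then show ?thesis using xs_eq J0 by simp
    qed
    show ?thesis using LIMSEQ_unique[OF lim1 lim2] .
  qed
  define s where "s = (\<Sum>i\<in>UNIV. L $ i)"
  have s0: "0 \<le> s" unfolding s_def using L0 by (simp add: sum_nonneg)
  have seq: "s = \<alpha> * s ^ (m - 1) + (1 - \<alpha>)"
  proof -
    have "s = (\<Sum>i\<in>UNIV. g L $ i)" unfolding s_def using Lfix by simp
    then show ?thesis using g_sum[of L] s_def by simp
  qed
  have s1: "s = 1"
  proof (rule ccontr)
    assume ne: "s \<noteq> 1"
    have lt: "s < 1" using ne L1 s_def by simp
    have "1 + real (m - 1) * (s - 1) \<le> (1 + (s - 1)) ^ (m - 1)"
      by (rule Bernoulli_inequality) (use s0 in simp)
    then have B: "1 - s ^ (m - 1) \<le> real (m - 1) * (1 - s)" by (simp add: algebra_simps)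
    have "1 - s = \<alpha> * (1 - s ^ (m - 1))" using seq by (simp add: algebra_simps)
    also have "\<dots> \<le> \<alpha> * (real (m - 1) * (1 - s))" using B a0 by (simp add: mult_left_mono)
    finally have "1 * (1 - s) \<le> (\<alpha> * real (m - 1)) * (1 - s)" by (simp add: mult.assoc)
    then have "1 \<le> \<alpha> * real (m - 1)" by (rule mult_right_le_imp_le) (use lt in simp)
    then show False using an by linarith
  qed
  have Lst: "stochastic L" unfolding stochastic_def using L0 s1 s_def by simp
  have Lg: "L = g L" using Lfix by (simp add: vec_eq_iff)
  have uniq: "y = L" if ys: "stochastic y" and yg: "y = g y" for y
  proof -
    have le: "L $ i \<le> y $ i" for i
      by (rule LIMSEQ_le_const2[OF convi]) (use xs_le_y[OF ys yg] in auto)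
    have "(\<Sum>i\<in>UNIV. y $ i - L $ i) = 0"
      using ys s1 unfolding stochastic_def s_def by (simp add: sum_subtractf)
    then have "\<forall>i\<in>UNIV. y $ i - L $ i = 0"
      by (subst sum_nonneg_eq_0_iff[symmetric]) (auto simp: le)
    then show ?thesis by (simp add: vec_eq_iff)
  qed
  show ?thesis using xs_inv Lst Lg uniq conv by blast
qed

end

theorem theorem3p2:
  fixes m :: nat and P :: "'n::finite list \<Rightarrow> real" and v :: "real ^ 'n" and \<alpha> :: real
  assumes "m \<ge> 2"
    and "transition_probability_tensor m P"
    and "stochastic v"
    and "0 \<le> \<alpha>" and "\<alpha> < 1" and "\<alpha> < 1 / (real m - 1)"
  shows "(\<forall>k. invertible (PR_jac m P \<alpha> (newton_seq m P \<alpha> v k))) \<and>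
         (\<exists>x. stochastic x \<and> x = \<alpha> *\<^sub>R R_pow m P x + (1 - \<alpha>) *\<^sub>R v \<and>
              (\<forall>y. stochastic y \<and> y = \<alpha> *\<^sub>R R_pow m P y + (1 - \<alpha>) *\<^sub>R v \<longrightarrow> y = x) \<and>
              newton_seq m P \<alpha> v \<longlonglongrightarrow> x)"
proof -
  interpret PRc m P v \<alpha> using assms by unfold_locales
  show ?thesis using main unfolding g_def .
qed

end
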